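(* Let $d\in\mathbb{N}$, let $M$ be an Orlicz function such that the Orlicz space $L_M(0,1)$ is separable, and let $f\in L_M(\mathbb{T}^d)$. If $(A_k)_{k=0}^n$ is a measurable partition of $\mathbb{T}^d$, then $$\sum_{k=0}^nJ_f^M(A_k)\leq 4\|f\|_{L_M},$$ where the sum runs over those $k$ with $m(A_k)>0$.
   Context: An Orlicz function is an even convex function $M$ on $\mathbb{R}$ with $M(0)=0$; $\|g\|_{L_M}=\inf\{\lambda>0:\int M(|g|/\lambda)\le1\}$. $\mathbb{T}^d$ carries the normalised Haar measure $m$, and $\|f\|_{L_M}=\|\mu(f)\|_{L_M(0,1)}$ where $\mu(f)$ is the decreasing rearrangement. For measurable $A\subset\mathbb{T}^d$ with $m(A)>0$, $J_f^M(A)=m(A)\|\sigma_{1/m(A)}\mu(f|_A)\|_{L_M(0,1)}$, where $\mu(f|_A)$ is the decreasing rearrangement of $|f|$ restricted to $A$ (on $(0,m(A))$, extended by $0$) and $(\sigma_ug)(t)=g(t/u)$. *)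

theory Defs
  imports "HOL-Analysis.Analysis"
begin

definition orlicz_function :: "(real \<Rightarrow> real) \<Rightarrow> bool" where
  "orlicz_function M \<longleftrightarrow> (\<forall>x. M (- x) = M x) \<and> convex_on UNIV M \<and> M 0 = 0"

definition orlicz_norm :: "(real \<Rightarrow> real) \<Rightarrow> (real \<Rightarrow> real) \<Rightarrow> real" where
  "orlicz_norm M g = Inf {l. l > 0 \<and>
     (\<integral>\<^sup>+ t \<in> {0<..<1}. ennreal (M (\<bar>g t\<bar> / l)) \<partial>lborel) \<le> 1}"

text \<open>The Orlicz space L_M(0,1) (functions on (0,1); values elsewhere are irrelevant).\<close>
definition orlicz_space :: "(real \<Rightarrow> real) \<Rightarrow> (real \<Rightarrow> real) set" where
  "orlicz_space M = {g. g \<in> borel_measurable lborel \<and>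
     (\<exists>l>0. (\<integral>\<^sup>+ t \<in> {0<..<1}. ennreal (M (\<bar>g t\<bar> / l)) \<partial>lborel) \<le> 1)}"

definition orlicz_separable :: "(real \<Rightarrow> real) \<Rightarrow> bool" where
  "orlicz_separable M \<longleftrightarrow> (\<exists>D. countable D \<and> D \<subseteq> orlicz_space M \<and>
     (\<forall>g\<in>orlicz_space M. \<forall>e>0. \<exists>h\<in>D. orlicz_norm M (\<lambda>t. g t - h t) < e))"

text \<open>The torus T^d modelled as [0,1)^d with the product Lebesgue (normalised Haar) measure.\<close>
definition torus :: "nat \<Rightarrow> (nat \<Rightarrow> real) measure" where
  "torus d = PiM {..<d} (\<lambda>_. restrict_space lborel {0..<1})"

definition rearr :: "'a measure \<Rightarrow> ('a \<Rightarrow> complex) \<Rightarrow> 'a set \<Rightarrow> real \<Rightarrow> real" where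
  "rearr N f A t = Inf {s. s \<ge> 0 \<and> measure N {x \<in> A. norm (f x) > s} \<le> t}"

definition in_orlicz_torus :: "(real \<Rightarrow> real) \<Rightarrow> nat \<Rightarrow> ((nat \<Rightarrow> real) \<Rightarrow> complex) \<Rightarrow> bool" where
  "in_orlicz_torus M d f \<longleftrightarrow> f \<in> borel_measurable (torus d) \<and>
     rearr (torus d) f (space (torus d)) \<in> orlicz_space M"

definition orlicz_norm_torus :: "(real \<Rightarrow> real) \<Rightarrow> nat \<Rightarrow> ((nat \<Rightarrow> real) \<Rightarrow> complex) \<Rightarrow> real" where
  "orlicz_norm_torus M d f = orlicz_norm M (rearr (torus d) f (space (torus d)))"

text \<open>J_f^M(A) = m(A) * || sigma_{1/m(A)} mu(f|_A) ||, with (sigma_u g)(t) = g(t/u).\<close>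
definition J :: "(real \<Rightarrow> real) \<Rightarrow> nat \<Rightarrow> ((nat \<Rightarrow> real) \<Rightarrow> complex) \<Rightarrow> (nat \<Rightarrow> real) set \<Rightarrow> real" where
  "J M d f A = measure (torus d) A *
     orlicz_norm M (\<lambda>t. rearr (torus d) f A (t * measure (torus d) A))"

end

theory Submission imports Defs "HOL-Probability.Probability" begin

lemma D_sets:
  assumes "A \<in> sets N" "f \<in> borel_measurable N"
  shows "{x\<in>A. s < norm (f x :: complex)} \<in> sets N"
proof -
  have "{x\<in>A. s < norm (f x)} = A \<inter> {x\<in>space N. s < norm (f x)}"
    using sets.sets_into_space[OF assms(1)] by auto
  moreover have "{x\<in>space N. s < norm (f x)} \<in> sets N" using assms(2) by measurable
  ultimately show ?thesis using assms(1) by auto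
qed

lemma D_small:
  assumes "finite_measure N" "A \<in> sets N" "f \<in> borel_measurable N" "t > 0"
  shows "\<exists>s\<ge>0. measure N {x\<in>A. s < norm (f x :: complex)} \<le> t"
proof -
  interpret finite_measure N by fact
  define B where "B n = {x\<in>A. real n < norm (f x)}" for n :: nat
  have "range B \<subseteq> sets N" unfolding B_def using D_sets[OF assms(2,3)] by auto
  moreover have "decseq B" unfolding B_def decseq_def by auto
  ultimately have "(\<lambda>n. measure N (B n)) \<longlonglongrightarrow> measure N (\<Inter>i. B i)"
    by (rule finite_Lim_measure_decseq)
  moreover have "(\<Inter>i. B i) = {}"
  proof safe
    fix x assume "x \<in> (\<Inter>i. B i)"
    obtain n where "norm (f x) < real n" using reals_Archimedean2 by blast
    moreover from \<open>x \<in> (\<Inter>i. B i)\<close> have "x \<in> B n" by blast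
    ultimately show "x \<in> {}" unfolding B_def by auto
  qed
  ultimately have "(\<lambda>n. measure N (B n)) \<longlonglongrightarrow> 0" by simp
  then have "eventually (\<lambda>n. measure N (B n) < t) sequentially"
    using assms(4) by (rule order_tendstoD)
  then obtain n where "measure N (B n) < t" by (auto simp: eventually_sequentially)
  then show ?thesis unfolding B_def by (intro exI[of _ "real n"]) auto
qed

lemma D_rc:
  assumes "finite_measure N" "A \<in> sets N" "f \<in> borel_measurable N"
    "t < measure N {x\<in>A. s < norm (f x :: complex)}"
  shows "\<exists>e>0. t < measure N {x\<in>A. s + e < norm (f x :: complex)}"
proof -
  interpret finite_measure N by fact
  define B where "B n = {x\<in>A. s + inverse (real (Suc n)) < norm (f x)}" for n :: nat
  have "range B \<subseteq> sets N" unfolding B_def using D_sets[OF assms(2,3)] by auto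
  moreover have "incseq B" unfolding B_def incseq_def
  proof safe
    fix m n x assume "m \<le> n" "s + inverse (real (Suc m)) < norm (f x)"
    moreover have "inverse (real (Suc n)) \<le> inverse (real (Suc m))"
      using \<open>m \<le> n\<close> by (simp add: le_imp_inverse_le)
    ultimately show "s + inverse (real (Suc n)) < norm (f x)" by linarith
  qed
  ultimately have "(\<lambda>n. measure N (B n)) \<longlonglongrightarrow> measure N (\<Union>i. B i)"
    by (rule finite_Lim_measure_incseq)
  moreover have "(\<Union>i. B i) = {x\<in>A. s < norm (f x)}"
  proof safe
    fix x assume "x \<in> A" "s < norm (f x)"
    then obtain n where "inverse (real (Suc n)) < norm (f x) - s"
      using reals_Archimedean[of "norm (f x) - s"] by auto
    then have "x \<in> B n" using \<open>x \<in> A\<close> unfolding B_def by simp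
    then show "x \<in> (\<Union>i. B i)" by blast
  next
    fix x i assume "x \<in> B i"
    then show "x \<in> A" "s < norm (f x)" unfolding B_def
      by (auto intro: less_trans[rotated] simp: add_pos_pos)
  qed
  ultimately have "(\<lambda>n. measure N (B n)) \<longlonglongrightarrow> measure N {x\<in>A. s < norm (f x)}" by simp
  then have "eventually (\<lambda>n. t < measure N (B n)) sequentially"
    using assms(4) by (rule order_tendstoD)
  then obtain n where "t < measure N (B n)" by (auto simp: eventually_sequentially)
  then show ?thesis unfolding B_def by (intro exI[of _ "inverse (real (Suc n))"]) auto
qed

lemma D_mono:
  assumes "finite_measure N" "A \<in> sets N" "f \<in> borel_measurable N" "s \<le> s'"
  shows "measure N {x\<in>A. s' < norm (f x :: complex)} \<le> measure N {x\<in>A. s < norm (f x)}"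
  using assms by (intro finite_measure.finite_measure_mono D_sets) auto

lemma rearr_gt:
  assumes "finite_measure N" "A \<in> sets N" "f \<in> borel_measurable N" "t > 0"
  shows "s < rearr N f A t \<longleftrightarrow> (s < 0 \<or> t < measure N {x\<in>A. s < norm (f x)})"
proof -
  define T where "T = {s. s \<ge> 0 \<and> measure N {x\<in>A. norm (f x) > s} \<le> t}"
  have R: "rearr N f A t = Inf T" unfolding rearr_def T_def ..
  have ne: "T \<noteq> {}" using D_small[OF assms] unfolding T_def by auto
  have bdd: "bdd_below T" unfolding T_def by (auto intro!: bdd_belowI[of _ 0])
  have ge0: "0 \<le> Inf T" using ne by (intro cInf_greatest) (auto simp: T_def)
  show ?thesis
  proof (cases "s < 0")
    case True then show ?thesis using ge0 R by auto
  next
    case False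
    show ?thesis
    proof (cases "t < measure N {x\<in>A. s < norm (f x)}")
      case True
      then obtain e where e: "e > 0" "t < measure N {x\<in>A. s + e < norm (f x)}"
        using D_rc[OF assms(1-3)] by blast
      have "s + e \<le> Inf T"
      proof (rule cInf_greatest[OF ne])
        fix s' assume "s' \<in> T"
        show "s + e \<le> s'"
        proof (rule ccontr)
          assume "\<not> s + e \<le> s'"
          then have "measure N {x\<in>A. s + e < norm (f x)} \<le> measure N {x\<in>A. s' < norm (f x)}"
            by (intro D_mono[OF assms(1-3)]) auto
          with e \<open>s' \<in> T\<close> show False unfolding T_def by auto
        qed
      qed
      then show ?thesis using e R True by auto
    next
      case False2: False
      then have "s \<in> T" using False unfolding T_def by auto
      then have "Inf T \<le> s" using bdd by (rule cInf_lower)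
      then show ?thesis using R False False2 by auto
    qed
  qed
qed

lemma rearr_integral:
  assumes fm: "finite_measure N" and A: "A \<in> sets N" and f: "f \<in> borel_measurable N"
    and apos: "measure N A > 0" and Phi: "\<Phi> \<in> borel_measurable borel"
  shows "ennreal (measure N A) * (\<integral>\<^sup>+ t. \<Phi> (rearr N f A (t * measure N A)) * indicator {0<..<1} t \<partial>lborel)
    = (\<integral>\<^sup>+ x. \<Phi> (norm (f x)) * indicator A x \<partial>N)"
proof -
  interpret finite_measure N by fact
  define a where "a = measure N A"
  define D where "D s = measure N {x\<in>A. s < norm (f x)}" for s
  define R where "R t = (if 0 < t \<and> t < a then rearr N f A t else 0)" for t
  define \<Omega> where "\<Omega> = {0<..<a}"
  have Dle: "D s \<le> a" for s unfolding D_def a_def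
    using A by (intro finite_measure_mono) auto
  have D0: "0 \<le> D s" for s unfolding D_def by simp
  have Dneg: "D s = a" if "s < 0" for s
  proof -
    have "{x\<in>A. s < norm (f x)} = A" using that by (auto intro: less_le_trans)
    then show ?thesis unfolding D_def a_def by simp
  qed
  have key: "s < R t \<longleftrightarrow> t < D s" if "0 < t" "t < a" for s t
  proof -
    have "s < R t \<longleftrightarrow> (s < 0 \<or> t < D s)"
      using rearr_gt[OF fm A f \<open>0 < t\<close>, of s] that unfolding R_def D_def by simp
    also have "\<dots> \<longleftrightarrow> t < D s" using Dneg that by auto
    finally show ?thesis .
  qed
  have lev: "{t. s < R t} = (if s < 0 then UNIV else {0<..<a} \<inter> {..<D s})" for s
  proof (cases "s < 0")
    case True
    have "s < R t" for t
    proof (cases "0 < t \<and> t < a")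
      case True
      then show ?thesis using key[of t s] Dneg[OF \<open>s < 0\<close>] by auto
    qed (use True in \<open>auto simp: R_def\<close>)
    then show ?thesis using True by auto
  next
    case False
    then show ?thesis using key by (auto simp: R_def)
  qed
  have Rm[measurable]: "R \<in> borel_measurable borel"
    unfolding borel_measurable_iff_greater
  proof
    fix s
    show "{w \<in> space borel. s < R w} \<in> sets borel" using lev[of s] by simp
  qed
  have Om: "\<Omega> \<inter> space lborel \<in> sets lborel" unfolding \<Omega>_def by simp
  have Am: "A \<inter> space N \<in> sets N" using A by simp
  have [measurable]: "(\<lambda>x. norm (f x)) \<in> borel_measurable N" using f by measurable
  define \<mu>1 where "\<mu>1 = distr (restrict_space lborel \<Omega>) borel R"
  define \<mu>2 where "\<mu>2 = distr (restrict_space N A) borel (\<lambda>x. norm (f x))"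
  have R1: "R \<in> measurable (restrict_space lborel \<Omega>) borel"
    by (intro measurable_restrict_space1) simp
  have R2: "(\<lambda>x. norm (f x)) \<in> measurable (restrict_space N A) borel"
    by (intro measurable_restrict_space1) simp
  have e1: "emeasure \<mu>1 {s<..} = ennreal (D s)" for s
  proof -
    have eq: "R -` {s<..} \<inter> space (restrict_space lborel \<Omega>) = {0<..<D s}"
    proof -
      have "R -` {s<..} \<inter> space (restrict_space lborel \<Omega>) = {t. 0 < t \<and> t < a \<and> t < D s}"
        by (auto simp: space_restrict_space \<Omega>_def key)
      also have "\<dots> = {0<..<D s}" using Dle[of s] by auto
      finally show ?thesis .
    qed
    have "emeasure \<mu>1 {s<..} = emeasure (restrict_space lborel \<Omega>) (R -` {s<..} \<inter> space (restrict_space lborel \<Omega>))"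
      unfolding \<mu>1_def by (rule emeasure_distr[OF R1]) simp
    also have "\<dots> = emeasure (restrict_space lborel \<Omega>) {0<..<D s}" using eq by simp
    also have "\<dots> = emeasure lborel {0<..<D s}"
      by (rule emeasure_restrict_space[OF Om]) (use Dle[of s] in \<open>auto simp: \<Omega>_def\<close>)
    also have "\<dots> = ennreal (D s)" using D0[of s] by simp
    finally show ?thesis .
  qed
  have e2: "emeasure \<mu>2 {s<..} = ennreal (D s)" for s
  proof -
    have "(\<lambda>x. norm (f x)) -` {s<..} \<inter> space (restrict_space N A) = {x\<in>A. s < norm (f x)}"
      using sets.sets_into_space[OF A] by (auto simp: space_restrict_space)
    then show ?thesis unfolding \<mu>2_def D_def
      using Am D_sets[OF A f, of s] sets.sets_into_space[OF A]
      by (simp add: emeasure_distr[OF R2] emeasure_restrict_space emeasure_eq_measure)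
  qed
  have "\<mu>1 = \<mu>2"
    by (rule measure_eqI_lessThan) (simp_all add: e1 e2, simp_all add: \<mu>1_def \<mu>2_def)
  define h where "h s = \<Phi> (R s) * indicator \<Omega> s" for s
  note Phi[measurable]
  have hm: "h \<in> borel_measurable borel" unfolding h_def \<Omega>_def by measurable
  have "(\<integral>\<^sup>+ s. h s \<partial>lborel) = (\<integral>\<^sup>+ s. \<Phi> (R s) \<partial>restrict_space lborel \<Omega>)"
    unfolding h_def using Om by (simp add: nn_integral_restrict_space)
  also have "\<dots> = (\<integral>\<^sup>+ y. \<Phi> y \<partial>\<mu>1)"
    unfolding \<mu>1_def by (rule nn_integral_distr[symmetric, OF R1]) simp
  also have "\<dots> = (\<integral>\<^sup>+ y. \<Phi> y \<partial>\<mu>2)" by (simp add: \<open>\<mu>1 = \<mu>2\<close>)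
  also have "\<dots> = (\<integral>\<^sup>+ x. \<Phi> (norm (f x)) \<partial>restrict_space N A)"
    unfolding \<mu>2_def by (rule nn_integral_distr[OF R2]) simp
  also have "\<dots> = (\<integral>\<^sup>+ x. \<Phi> (norm (f x)) * indicator A x \<partial>N)"
    using Am by (simp add: nn_integral_restrict_space)
  finally have I1: "(\<integral>\<^sup>+ s. h s \<partial>lborel) = (\<integral>\<^sup>+ x. \<Phi> (norm (f x)) * indicator A x \<partial>N)" .
  have apos': "a > 0" using apos a_def by simp
  have "(\<integral>\<^sup>+ s. h s \<partial>lborel) = ennreal \<bar>a\<bar> * (\<integral>\<^sup>+ x. h (0 + a * x) \<partial>lborel)"
    using apos' by (intro nn_integral_real_affine hm) simp
  also have "(\<integral>\<^sup>+ x. h (0 + a * x) \<partial>lborel)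
      = (\<integral>\<^sup>+ t. \<Phi> (rearr N f A (t * a)) * indicator {0<..<1} t \<partial>lborel)"
  proof (rule nn_integral_cong)
    fix x :: real
    have "0 < a * x \<and> a * x < a \<longleftrightarrow> x \<in> {0<..<1}"
      using apos' by (simp add: zero_less_mult_iff)
    then show "h (0 + a * x) = \<Phi> (rearr N f A (x * a)) * indicator {0<..<1} x"
      unfolding h_def R_def \<Omega>_def by (auto simp: mult.commute indicator_def)
  qed
  finally show ?thesis using I1 apos' unfolding a_def by simp
qed


lemma torus_prob: "prob_space (torus d)"
  unfolding torus_def by (intro prob_space_PiM prob_space_restrict_space) auto

lemma orlicz_nonneg: assumes "orlicz_function M" shows "0 \<le> M x"
proof -
  have c: "convex_on UNIV M" and e: "M (- x) = M x" and z: "M 0 = 0"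
    using assms unfolding orlicz_function_def by auto
  have "M ((1 - 1/2) *\<^sub>R (- x) + (1/2) *\<^sub>R x) \<le> (1 - 1/2) * M (- x) + (1/2) * M x"
    by (rule convex_onD[OF c]) auto
  then show ?thesis using e z by simp
qed

lemma orlicz_scale: assumes "orlicz_function M" "1 \<le> \<theta>" shows "M (z / \<theta>) \<le> M z / \<theta>"
proof -
  have c: "convex_on UNIV M" and z: "M 0 = 0"
    using assms unfolding orlicz_function_def by auto
  have "M ((1 - 1/\<theta>) *\<^sub>R 0 + (1/\<theta>) *\<^sub>R z) \<le> (1 - 1/\<theta>) * M 0 + (1/\<theta>) * M z"
    by (rule convex_onD[OF c]) (use assms(2) in auto)
  then show ?thesis using z by simp
qed

lemma orlicz_meas: assumes "orlicz_function M" shows "M \<in> borel_measurable borel"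
proof -
  have "convex_on UNIV M" using assms unfolding orlicz_function_def by auto
  then have "continuous_on UNIV M" by (intro convex_on_continuous) auto
  then show ?thesis by (rule borel_measurable_continuous_onI)
qed


theorem lemma3p3:
  fixes M :: "real \<Rightarrow> real" and d n :: nat
    and f :: "(nat \<Rightarrow> real) \<Rightarrow> complex" and A :: "nat \<Rightarrow> (nat \<Rightarrow> real) set"
  assumes "orlicz_function M"
    and "orlicz_separable M"
    and "in_orlicz_torus M d f"
    and "\<And>k. k \<le> n \<Longrightarrow> A k \<in> sets (torus d)"
    and "\<And>j k. j \<le> n \<Longrightarrow> k \<le> n \<Longrightarrow> j \<noteq> k \<Longrightarrow> A j \<inter> A k = {}"
    and "(\<Union>k\<in>{0..n}. A k) = space (torus d)"
  shows "(\<Sum>k\<in>{k\<in>{0..n}. measure (torus d) (A k) > 0}. J M d f (A k))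
           \<le> 4 * orlicz_norm_torus M d f"
proof -
  define N where "N = torus d"
  interpret prob_space N unfolding N_def by (rule torus_prob)
  have fm: "finite_measure N" by unfold_locales
  have p1: "measure N (space N) = 1" by (simp add: measure_def emeasure_space_1)
  have f[measurable]: "f \<in> borel_measurable N" using assms(3) unfolding in_orlicz_torus_def N_def by simp
  have Mm[measurable]: "M \<in> borel_measurable borel" using orlicz_meas[OF assms(1)] .
  have Mnn: "0 \<le> M x" for x using orlicz_nonneg[OF assms(1)] .
  define K where "K = {k\<in>{0..n}. measure N (A k) > 0}"
  have finK: "finite K" unfolding K_def by simp
  have AK: "A k \<in> sets N" if "k \<in> K" for k using that assms(4) unfolding K_def N_def by auto
  have disj: "disjoint_family_on A K" unfolding disjoint_family_on_def K_def using assms(5) by auto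
  define g where "g = rearr N f (space N)"
  define S where "S = {l. l > 0 \<and> (\<integral>\<^sup>+ t\<in>{0<..<1}. ennreal (M (\<bar>g t\<bar> / l)) \<partial>lborel) \<le> 1}"
  have normS: "orlicz_norm_torus M d f = Inf S"
    unfolding orlicz_norm_torus_def orlicz_norm_def S_def g_def N_def ..
  have Sne: "S \<noteq> {}" using assms(3)
    unfolding in_orlicz_torus_def orlicz_space_def S_def g_def N_def by auto
  have S0: "0 \<le> Inf S" using Sne by (intro cInf_greatest) (auto simp: S_def)
  define \<Phi> where "\<Phi> l y = ennreal (M (\<bar>y\<bar> / l))" for l y :: real
  have \<Phi>m[measurable]: "\<Phi> l \<in> borel_measurable borel" for l unfolding \<Phi>_def by measurable
  have full: "(\<integral>\<^sup>+ x. \<Phi> l (norm (f x)) \<partial>N) = (\<integral>\<^sup>+ t. \<Phi> l (g t) * indicator {0<..<1} t \<partial>lborel)" for l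
  proof -
    have "ennreal (measure N (space N)) * (\<integral>\<^sup>+ t. \<Phi> l (rearr N f (space N) (t * measure N (space N))) * indicator {0<..<1} t \<partial>lborel)
      = (\<integral>\<^sup>+ x. \<Phi> l (norm (f x)) * indicator (space N) x \<partial>N)"
      by (rule rearr_integral[OF fm]) (auto simp: p1)
    moreover have "(\<integral>\<^sup>+ x. \<Phi> l (norm (f x)) * indicator (space N) x \<partial>N) = (\<integral>\<^sup>+ x. \<Phi> l (norm (f x)) \<partial>N)"
      by (rule nn_integral_cong) simp
    ultimately show ?thesis by (simp add: p1 g_def)
  qed
  have main: "(\<Sum>k\<in>K. J M d f (A k)) \<le> 2 * l" if "l \<in> S" for l
  proof -
    have lpos: "l > 0" and lint: "(\<integral>\<^sup>+ t. \<Phi> l (g t) * indicator {0<..<1} t \<partial>lborel) \<le> 1"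
      using that unfolding S_def \<Phi>_def by auto
    have tot: "(\<integral>\<^sup>+ x. \<Phi> l (norm (f x)) \<partial>N) \<le> 1" using lint full by simp
    define B where "B k = (\<integral>\<^sup>+ x. \<Phi> l (norm (f x)) * indicator (A k) x \<partial>N)" for k
    define b where "b k = enn2real (B k)" for k
    have Ble: "B k \<le> 1" for k
    proof -
      have "B k \<le> (\<integral>\<^sup>+ x. \<Phi> l (norm (f x)) \<partial>N)" unfolding B_def
        by (intro nn_integral_mono) (auto simp: indicator_def)
      then show ?thesis using tot by simp
    qed
    have Bb: "B k = ennreal (b k)" for k unfolding b_def using Ble[of k]
      by (cases "B k") (auto simp: top_unique)
    have b0: "0 \<le> b k" for k unfolding b_def by simp
    have "(\<Sum>k\<in>K. B k) = (\<integral>\<^sup>+ x. (\<Sum>k\<in>K. \<Phi> l (norm (f x)) * indicator (A k) x) \<partial>N)"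
      unfolding B_def using AK by (intro nn_integral_sum[symmetric]) auto
    also have "\<dots> \<le> (\<integral>\<^sup>+ x. \<Phi> l (norm (f x)) \<partial>N)"
    proof (rule nn_integral_mono)
      fix x
      have "(\<Sum>k\<in>K. \<Phi> l (norm (f x)) * indicator (A k) x) = \<Phi> l (norm (f x)) * (\<Sum>k\<in>K. indicator (A k) x)"
        by (simp add: sum_distrib_left)
      also have "\<dots> = \<Phi> l (norm (f x)) * indicator (\<Union>(A ` K)) x"
        by (subst indicator_UN_disjoint[OF finK disj]) simp
      also have "\<dots> \<le> \<Phi> l (norm (f x))" by (auto simp: indicator_def)
      finally show "(\<Sum>k\<in>K. \<Phi> l (norm (f x)) * indicator (A k) x) \<le> \<Phi> l (norm (f x))" .
    qed
    also have "\<dots> \<le> 1" by (rule tot)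
    finally have "(\<Sum>k\<in>K. ennreal (b k)) \<le> 1" by (simp add: Bb)
    then have sumb: "(\<Sum>k\<in>K. b k) \<le> 1" using b0 by (simp add: sum_nonneg)
    have suma: "(\<Sum>k\<in>K. measure N (A k)) \<le> 1"
    proof -
      have "(\<Sum>k\<in>K. measure N (A k)) = measure N (\<Union>k\<in>K. A k)"
        using AK disj finK by (intro finite_measure_finite_Union[symmetric]) auto
      also have "\<dots> \<le> 1" by (rule prob_le_1)
      finally show ?thesis .
    qed
    have Jk: "J M d f (A k) \<le> l * (measure N (A k) + b k)" if "k \<in> K" for k
    proof -
      define a where "a = measure N (A k)"
      have apos: "a > 0" using that unfolding K_def a_def by auto
      define \<theta> where "\<theta> = max 1 (b k / a)"
      have th1: "1 \<le> \<theta>" unfolding \<theta>_def by simp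
      have bth: "b k / \<theta> \<le> a"
      proof -
        have "b k / a \<le> \<theta>" unfolding \<theta>_def by simp
        then have "b k \<le> a * \<theta>" using apos by (simp add: divide_le_eq mult.commute)
        then show ?thesis using th1 by (simp add: divide_le_eq mult.commute)
      qed
      have ath: "a * \<theta> \<le> a + b k"
      proof (cases "b k / a \<le> 1")
        case True then show ?thesis using b0[of k] by (simp add: \<theta>_def)
      next
        case False then show ?thesis using apos by (simp add: \<theta>_def)
      qed
      define Sk where "Sk = {lam. lam > 0 \<and> (\<integral>\<^sup>+ t\<in>{0<..<1}. ennreal (M (\<bar>rearr N f (A k) (t * a)\<bar> / lam)) \<partial>lborel) \<le> 1}"
      have Jeq: "J M d f (A k) = a * Inf Sk"
        unfolding J_def orlicz_norm_def Sk_def a_def N_def ..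
      have "l * \<theta> \<in> Sk"
      proof -
        let ?X = "(\<integral>\<^sup>+ t. \<Phi> (l * \<theta>) (rearr N f (A k) (t * a)) * indicator {0<..<1} t \<partial>lborel)"
        have "ennreal a * ?X = (\<integral>\<^sup>+ x. \<Phi> (l * \<theta>) (norm (f x)) * indicator (A k) x \<partial>N)"
          unfolding a_def by (rule rearr_integral[OF fm AK[OF that] f]) (use apos a_def in auto)
        also have "\<dots> \<le> (\<integral>\<^sup>+ x. ennreal (1 / \<theta>) * (\<Phi> l (norm (f x)) * indicator (A k) x) \<partial>N)"
        proof (rule nn_integral_mono)
          fix x
          have "M (\<bar>norm (f x)\<bar> / (l * \<theta>)) \<le> M (\<bar>norm (f x)\<bar> / l) / \<theta>"
            using orlicz_scale[OF assms(1) th1, of "\<bar>norm (f x)\<bar> / l"] by (simp add: divide_divide_eq_left)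
          then have "\<Phi> (l * \<theta>) (norm (f x)) \<le> ennreal (1 / \<theta>) * \<Phi> l (norm (f x))"
            unfolding \<Phi>_def using th1 Mnn by (simp add: ennreal_mult'[symmetric] ennreal_leI)
          then show "\<Phi> (l * \<theta>) (norm (f x)) * indicator (A k) x \<le> ennreal (1 / \<theta>) * (\<Phi> l (norm (f x)) * indicator (A k) x)"
            by (auto simp: indicator_def)
        qed
        also have "\<dots> = ennreal (1 / \<theta>) * B k"
          unfolding B_def using AK[OF that] by (intro nn_integral_cmult) auto
        also have "\<dots> = ennreal (b k / \<theta>)" using th1 b0[of k] by (simp add: Bb ennreal_mult'[symmetric])
        also have "\<dots> \<le> ennreal a * 1" using bth by (simp add: ennreal_leI)
        finally have "?X \<le> 1" using apos by (subst (asm) ennreal_mult_le_mult_iff) auto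
        then show ?thesis unfolding Sk_def \<Phi>_def using lpos th1 by auto
      qed
      then have "Inf Sk \<le> l * \<theta>" by (intro cInf_lower) (auto simp: Sk_def intro!: bdd_belowI[of _ 0])
      then have "J M d f (A k) \<le> a * (l * \<theta>)" unfolding Jeq using apos by (simp add: mult_left_mono)
      also have "\<dots> = l * (a * \<theta>)" by simp
      also have "\<dots> \<le> l * (a + b k)" using ath lpos by (simp add: mult_left_mono)
      finally show ?thesis unfolding a_def .
    qed
    have "(\<Sum>k\<in>K. J M d f (A k)) \<le> (\<Sum>k\<in>K. l * (measure N (A k) + b k))"
      by (rule sum_mono) (rule Jk)
    also have "\<dots> = l * ((\<Sum>k\<in>K. measure N (A k)) + (\<Sum>k\<in>K. b k))"
      by (simp add: sum.distrib[symmetric] sum_distrib_left)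
    also have "\<dots> \<le> l * 2" using suma sumb lpos by (intro mult_left_mono) auto
    finally show ?thesis by simp
  qed
  have "(\<Sum>k\<in>K. J M d f (A k)) / 2 \<le> Inf S"
  proof (rule cInf_greatest[OF Sne])
    fix x assume "x \<in> S"
    from main[OF this] show "(\<Sum>k\<in>K. J M d f (A k)) / 2 \<le> x" by simp
  qed
  then have "(\<Sum>k\<in>K. J M d f (A k)) \<le> 4 * Inf S" using S0 by linarith
  then show ?thesis unfolding normS K_def N_def .
qed

end
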